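(* Let $H=(\mathcal{V},\mathcal{I})$ be an interval hypergraph, and let $H'=(\mathcal{V}',\mathcal{I}')$ be constructed from $H$ as follows: colour every point of $\mathcal{V}$ white; for every pair $I_i,I_j\in\mathcal{I}$ with $I_j\subseteq I_i$, colour every point of $I_i\setminus I_j$ black; assume every interval of $\mathcal{I}$ contains at least one white point; let $\mathcal{V}'$ be the set of white points and let $\mathcal{I}'$ consist of the sets $I\cap\mathcal{V}'$ for $I\in\mathcal{I}$ (keeping one copy among sets with equal endpoints). Then $H$ is exactly hittable if and only if $H'$ is exactly hittable.
   Context: An interval hypergraph has a finite linearly ordered vertex set (points on a line) and hyperedges that are intervals (sets of consecutive points). A hypergraph is exactly hittable if there is a set $S$ of vertices with $|S\cap I|=1$ for every hyperedge $I$. *)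

theory Defs
  imports Main
begin

definition is_interval :: "'a::linorder set \<Rightarrow> 'a set \<Rightarrow> bool" where
  "is_interval V I \<longleftrightarrow> I \<subseteq> V \<and> I \<noteq> {} \<and>
     (\<forall>x\<in>I. \<forall>z\<in>I. \<forall>y\<in>V. x \<le> y \<and> y \<le> z \<longrightarrow> y \<in> I)"

definition interval_hypergraph :: "'a::linorder set \<Rightarrow> 'a set set \<Rightarrow> bool" where
  "interval_hypergraph V E \<longleftrightarrow> finite V \<and> (\<forall>I\<in>E. is_interval V I)"

definition exactly_hittable :: "'a set \<Rightarrow> 'a set set \<Rightarrow> bool" where
  "exactly_hittable V E \<longleftrightarrow> (\<exists>S\<subseteq>V. \<forall>I\<in>E. card (S \<inter> I) = 1)"

definition black_points :: "'a set set \<Rightarrow> 'a set" where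
  "black_points E = (\<Union>I\<in>E. \<Union>J\<in>E. if J \<subseteq> I then I - J else {})"

definition white_points :: "'a set \<Rightarrow> 'a set set \<Rightarrow> 'a set" where
  "white_points V E = V - black_points E"

definition reduced_edges :: "'a set \<Rightarrow> 'a set set \<Rightarrow> 'a set set" where
  "reduced_edges V E = (\<lambda>I. I \<inter> white_points V E) ` E"

end

theory Submission
  imports Defs
begin

lemma black_avoid:
  assumes "\<forall>I\<in>E. card (S \<inter> I) = 1" and "I \<in> E" "J \<in> E" "J \<subseteq> I"
  shows "S \<inter> (I - J) = {}"
proof -
  have cI: "card (S \<inter> I) = 1" and cJ: "card (S \<inter> J) = 1" using assms by auto
  have fin: "finite (S \<inter> I)" using cI card_gt_0_iff by (metis zero_less_one)
  have sub: "S \<inter> J \<subseteq> S \<inter> I" using assms(4) by auto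
  have "S \<inter> J = S \<inter> I" using card_subset_eq[OF fin sub] cI cJ by simp
  thus ?thesis by auto
qed

theorem lemma11:
  fixes V :: "'a::linorder set" and E :: "'a set set"
  assumes "interval_hypergraph V E"
    and "\<forall>I\<in>E. I \<inter> white_points V E \<noteq> {}"
  shows "exactly_hittable V E \<longleftrightarrow>
         exactly_hittable (white_points V E) (reduced_edges V E)"
proof
  assume "exactly_hittable V E"
  then obtain S where S: "S \<subseteq> V" "\<forall>I\<in>E. card (S \<inter> I) = 1"
    unfolding exactly_hittable_def by blast
  have "S \<inter> black_points E = {}"
  proof (rule ccontr)
    assume "S \<inter> black_points E \<noteq> {}"
    then obtain x where x: "x \<in> S" "x \<in> black_points E" by blast
    then obtain I J where IJ: "I \<in> E" "J \<in> E" "x \<in> (if J \<subseteq> I then I - J else {})"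
      unfolding black_points_def by blast
    hence "J \<subseteq> I" "x \<in> I - J" by (auto split: if_splits)
    thus False using black_avoid[OF S(2) IJ(1,2)] x(1) by blast
  qed
  hence SW: "S \<subseteq> white_points V E" using S(1) unfolding white_points_def by blast
  have "\<forall>I'\<in>reduced_edges V E. card (S \<inter> I') = 1"
  proof
    fix I' assume "I' \<in> reduced_edges V E"
    then obtain I where "I \<in> E" "I' = I \<inter> white_points V E"
      unfolding reduced_edges_def by blast
    moreover have "S \<inter> (I \<inter> white_points V E) = S \<inter> I" using SW by blast
    ultimately show "card (S \<inter> I') = 1" using S(2) by simp
  qed
  thus "exactly_hittable (white_points V E) (reduced_edges V E)"
    using SW unfolding exactly_hittable_def by blast
next
  assume "exactly_hittable (white_points V E) (reduced_edges V E)"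
  then obtain S where S: "S \<subseteq> white_points V E" "\<forall>I'\<in>reduced_edges V E. card (S \<inter> I') = 1"
    unfolding exactly_hittable_def by blast
  have SV: "S \<subseteq> V" using S(1) unfolding white_points_def by blast
  have "\<forall>I\<in>E. card (S \<inter> I) = 1"
  proof
    fix I assume I: "I \<in> E"
    hence "I \<inter> white_points V E \<in> reduced_edges V E" unfolding reduced_edges_def by blast
    moreover have "S \<inter> (I \<inter> white_points V E) = S \<inter> I" using S(1) by blast
    ultimately show "card (S \<inter> I) = 1" using S(2) by metis
  qed
  thus "exactly_hittable V E" using SV unfolding exactly_hittable_def by blast
qed

end
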